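(* Algorithm 1 (as described in the context) is a decision procedure for DQBF: on every input DQBF $\Phi$ it terminates, and it returns TRUE if $\Phi$ is true and FALSE if $\Phi$ is false, for every admissible choice made during the run.
   Context: For a set $V$ of variables, $[V]$ is the set of assignments $V\to\{\textsc{true},\textsc{false}\}$; assignments are identified with terms of the literals they make true, $\neg\sigma$ is the clause of the negations of these literals, and $\sigma|_W$ denotes restriction. A DQBF is $\Phi=\forall u_1\ldots\forall u_n\exists e_1(D_1)\ldots\exists e_m(D_m).\varphi$ with pairwise distinct variables, $U=\{u_i\}$, $E=\{e_j\}$, dependency sets $D(e_j)=D_j\subseteq U$, $\varphi$ a CNF over $U\cup E$; a model is a family $(f_e)_{e\in E}$, $f_e:[D(e)]\to\{\textsc{true},\textsc{false}\}$, such that for all $\sigma\in[U]$ the assignment $\sigma$ together with $e\mapsto f_e(\sigma|_{D(e)})$ satisfies $\varphi$; $\Phi$ is true iff it has a model, false otherwise. A definition of a variable $x$ by a set $X$ in a formula $\chi$ is a formula $\psi$ with $\mathit{var}(\psi)\subseteq X$ such that every satisfying assignment $\lambda$ of $\chi$ has $\lambda(x)=\psi[\lambda]$. Arbiter variables $e^\sigma$ ($e\in E$, $\sigma\in[D(e)]$) are fresh variables. Algorithm 1. Phase 1: set $A=\emptyset$, $\varphi_A=\emptyset$, $\psi_{\mathit{Def}}=$ empty conjunction. For $i=1,\dots,m$: while $e_i$ has no definition by $A\cup D_i$ in $\varphi\wedge\varphi_A$, choose $\xi\in[D_i\cup A]$ such that both $\varphi\wedge\varphi_A\wedge\xi\wedge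 e_i$ and $\varphi\wedge\varphi_A\wedge\xi\wedge\neg e_i$ are satisfiable, let $\sigma=\xi|_{D_i}$, add $e_i^\sigma$ to $A$ and the clauses $(e_i^\sigma\vee\neg\sigma\vee\neg e_i)$, $(\neg e_i^\sigma\vee\neg\sigma\vee e_i)$ to $\varphi_A$. Then choose a definition $\psi^i$ of $e_i$ by $A\cup D_i$ in $\varphi\wedge\varphi_A$ and conjoin $(e_i\leftrightarrow\psi^i)$ to $\psi_{\mathit{Def}}$. Phase 2: let $\tau\in[A]$ set all arbiter variables true, $\mathcal{C}=\emptyset$. Repeat: if $\neg\varphi\wedge\psi_{\mathit{Def}}\wedge\tau$ is unsatisfiable, return TRUE; otherwise choose a satisfying assignment $\sigma$ of it, choose a subset $\rho$ of the literals of $\tau\wedge\sigma|_U$ with $\varphi\wedge\varphi_A\wedge\rho$ unsatisfiable, add the clause $\neg(\rho|_A)$ to $\mathcal{C}$; if $\mathcal{C}$ is satisfiable, let $\tau\in[A]$ satisfy $\mathcal{C}$ and repeat, else return FALSE. *)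

theory Defs
  imports Main
begin

type_synonym 'a lit = "'a \<times> bool"      \<comment> \<open>(x, True) is x, (x, False) is \<not>x\<close>
type_synonym 'a clause = "'a lit set"
type_synonym 'a cnf = "'a clause set"
type_synonym 'a trm = "'a lit set"        \<comment> \<open>term = conjunction of literals\<close>

definition lit_sat :: "('a \<Rightarrow> bool) \<Rightarrow> 'a lit \<Rightarrow> bool" where
  "lit_sat \<alpha> l = (\<alpha> (fst l) = snd l)"

definition clause_sat :: "('a \<Rightarrow> bool) \<Rightarrow> 'a clause \<Rightarrow> bool" where
  "clause_sat \<alpha> C = (\<exists>l\<in>C. lit_sat \<alpha> l)"

definition cnf_sat :: "('a \<Rightarrow> bool) \<Rightarrow> 'a cnf \<Rightarrow> bool" where
  "cnf_sat \<alpha> F = (\<forall>C\<in>F. clause_sat \<alpha> C)"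

definition term_sat :: "('a \<Rightarrow> bool) \<Rightarrow> 'a trm \<Rightarrow> bool" where
  "term_sat \<alpha> T = (\<forall>l\<in>T. lit_sat \<alpha> l)"

definition satisfiable :: "'a cnf \<Rightarrow> bool" where
  "satisfiable F = (\<exists>\<alpha>. cnf_sat \<alpha> F)"

definition units :: "'a trm \<Rightarrow> 'a cnf" where
  "units T = {{l} | l. l \<in> T}"

text \<open>[V]: the assignments V \<rightarrow> {true,false}, identified with the terms of the literals
  they make true.\<close>
definition asg :: "'a set \<Rightarrow> 'a trm set" where
  "asg V = {T. \<exists>g. T = {(v, g v) | v. v \<in> V}}"

definition restr :: "'a trm \<Rightarrow> 'a set \<Rightarrow> 'a trm" where
  "restr \<sigma> W = {l \<in> \<sigma>. fst l \<in> W}"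

definition neg_trm :: "'a trm \<Rightarrow> 'a clause" where
  "neg_trm \<sigma> = {(x, \<not> b) | x b. (x, b) \<in> \<sigma>}"

datatype 'a form = FVar 'a | FTrue | FFalse | FNot "'a form"
  | FAnd "'a form" "'a form" | FOr "'a form" "'a form"

fun feval :: "('a \<Rightarrow> bool) \<Rightarrow> 'a form \<Rightarrow> bool" where
  "feval \<alpha> (FVar x) = \<alpha> x"
| "feval \<alpha> FTrue = True"
| "feval \<alpha> FFalse = False"
| "feval \<alpha> (FNot f) = (\<not> feval \<alpha> f)"
| "feval \<alpha> (FAnd f g) = (feval \<alpha> f \<and> feval \<alpha> g)"
| "feval \<alpha> (FOr f g) = (feval \<alpha> f \<or> feval \<alpha> g)"

fun fvars :: "'a form \<Rightarrow> 'a set" where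
  "fvars (FVar x) = {x}"
| "fvars FTrue = {}"
| "fvars FFalse = {}"
| "fvars (FNot f) = fvars f"
| "fvars (FAnd f g) = fvars f \<union> fvars g"
| "fvars (FOr f g) = fvars f \<union> fvars g"

definition is_definition :: "'a cnf \<Rightarrow> 'a set \<Rightarrow> 'a \<Rightarrow> 'a form \<Rightarrow> bool" where
  "is_definition \<chi> X x \<psi> =
     (fvars \<psi> \<subseteq> X \<and> (\<forall>\<alpha>. cnf_sat \<alpha> \<chi> \<longrightarrow> \<alpha> x = feval \<alpha> \<psi>))"

definition has_definition :: "'a cnf \<Rightarrow> 'a set \<Rightarrow> 'a \<Rightarrow> bool" where
  "has_definition \<chi> X x = (\<exists>\<psi>. is_definition \<chi> X x \<psi>)"

text \<open>A DQBF \<forall>u_1..u_n \<exists>e_1(D_1)..\<exists>e_m(D_m). \<phi> is given by the list us of universal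
  variables, the list es of existential variables, the dependency map D and the CNF \<phi>.\<close>
definition dqbf_wf :: "'v list \<Rightarrow> 'v list \<Rightarrow> ('v \<Rightarrow> 'v set) \<Rightarrow> 'v cnf \<Rightarrow> bool" where
  "dqbf_wf us es D \<phi> =
     (distinct (us @ es) \<and> (\<forall>e\<in>set es. D e \<subseteq> set us) \<and> finite \<phi> \<and>
      (\<forall>C\<in>\<phi>. finite C \<and> fst ` C \<subseteq> set us \<union> set es))"

text \<open>Truth: existence of a model (f_e)_e with f_e : [D(e)] \<rightarrow> bool (only its values on
  [D(e)] matter).\<close>
definition dqbf_true :: "'v list \<Rightarrow> 'v list \<Rightarrow> ('v \<Rightarrow> 'v set) \<Rightarrow> 'v cnf \<Rightarrow> bool" where
  "dqbf_true us es D \<phi> =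
     (\<exists>f :: 'v \<Rightarrow> 'v trm \<Rightarrow> bool. \<forall>\<sigma> \<in> asg (set us).
        cnf_sat (\<lambda>x. if x \<in> set us then (x, True) \<in> \<sigma> else f x (restr \<sigma> (D x))) \<phi>)"

text \<open>Variables of the algorithm: original variables and (fresh) arbiter variables e^\<sigma>,
  \<sigma> \<in> [D(e)].\<close>
datatype 'v avar = Orig 'v | Arb 'v "'v trm"

definition lift_cnf :: "'v cnf \<Rightarrow> 'v avar cnf" where
  "lift_cnf \<phi> = (\<lambda>C. (\<lambda>(x, b). (Orig x, b)) ` C) ` \<phi>"

text \<open>\<psi>_Def is represented by the list of pairs (e_i, \<psi>^i), standing for the conjunction
  of the (e_i \<leftrightarrow> \<psi>^i).\<close>
definition defs_sat :: "('v avar \<Rightarrow> bool) \<Rightarrow> ('v \<times> 'v avar form) list \<Rightarrow> bool" where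
  "defs_sat \<alpha> ds = (\<forall>(e, \<psi>) \<in> set ds. \<alpha> (Orig e) = feval \<alpha> \<psi>)"

text \<open>States: Phase1 i A \<phi>_A \<psi>_Def (currently treating e_{i+1}, 0-based index i);
  Phase2 A \<phi>_A \<psi>_Def \<C> \<tau>; Result b (returned TRUE/FALSE).\<close>
datatype 'v state =
    Phase1 nat "'v avar set" "'v avar cnf" "('v \<times> 'v avar form) list"
  | Phase2 "'v avar set" "'v avar cnf" "('v \<times> 'v avar form) list" "'v avar cnf" "'v avar trm"
  | Result bool

definition init_state :: "'v state" where
  "init_state = Phase1 0 {} {} []"

inductive alg_step :: "'v list \<Rightarrow> 'v list \<Rightarrow> ('v \<Rightarrow> 'v set) \<Rightarrow> 'v cnf
                        \<Rightarrow> 'v state \<Rightarrow> 'v state \<Rightarrow> bool"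
  for us es D \<phi> where
  \<comment> \<open>Phase 1, loop body: e_i has no definition, add an arbiter e_i^\<sigma>\<close>
  add_arbiter:
  "\<lbrakk> i < length es; e = es ! i;
     \<not> has_definition (lift_cnf \<phi> \<union> \<phi>A) (Orig ` D e \<union> A) (Orig e);
     \<xi> \<in> asg (Orig ` D e \<union> A);
     satisfiable (lift_cnf \<phi> \<union> \<phi>A \<union> units \<xi> \<union> {{(Orig e, True)}});
     satisfiable (lift_cnf \<phi> \<union> \<phi>A \<union> units \<xi> \<union> {{(Orig e, False)}});
     \<sigma> = {(v, b). (Orig v, b) \<in> \<xi> \<and> v \<in> D e};
     \<sigma>' = restr \<xi> (Orig ` D e) \<rbrakk>
   \<Longrightarrow> alg_step us es D \<phi> (Phase1 i A \<phi>A ds)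
        (Phase1 i (insert (Arb e \<sigma>) A)
           (\<phi>A \<union> {insert (Arb e \<sigma>, True) (insert (Orig e, False) (neg_trm \<sigma>')),
                  insert (Arb e \<sigma>, False) (insert (Orig e, True) (neg_trm \<sigma>'))})
           ds)"
  \<comment> \<open>Phase 1, after the loop: choose a definition \<psi>^i and conjoin (e_i \<leftrightarrow> \<psi>^i)\<close>
| choose_def:
  "\<lbrakk> i < length es; e = es ! i;
     is_definition (lift_cnf \<phi> \<union> \<phi>A) (Orig ` D e \<union> A) (Orig e) \<psi> \<rbrakk>
   \<Longrightarrow> alg_step us es D \<phi> (Phase1 i A \<phi>A ds) (Phase1 (Suc i) A \<phi>A (ds @ [(e, \<psi>)]))"
| start_phase2:
  "i = length es
   \<Longrightarrow> alg_step us es D \<phi> (Phase1 i A \<phi>A ds)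
        (Phase2 A \<phi>A ds {} {(a, True) | a. a \<in> A})"
| ret_true:
  "\<not> (\<exists>\<alpha>. \<not> cnf_sat \<alpha> (lift_cnf \<phi>) \<and> defs_sat \<alpha> ds \<and> term_sat \<alpha> \<tau>)
   \<Longrightarrow> alg_step us es D \<phi> (Phase2 A \<phi>A ds CC \<tau>) (Result True)"
  \<comment> \<open>Phase 2: counterexample \<sigma>, core \<rho>, new clause; \<C> unsatisfiable: return FALSE\<close>
| ret_false:
  "\<lbrakk> \<not> cnf_sat \<alpha> (lift_cnf \<phi>); defs_sat \<alpha> ds; term_sat \<alpha> \<tau>;
     \<rho> \<subseteq> \<tau> \<union> {(Orig u, \<alpha> (Orig u)) | u. u \<in> set us};
     \<not> satisfiable (lift_cnf \<phi> \<union> \<phi>A \<union> units \<rho>);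
     \<not> satisfiable (insert (neg_trm (restr \<rho> A)) CC) \<rbrakk>
   \<Longrightarrow> alg_step us es D \<phi> (Phase2 A \<phi>A ds CC \<tau>) (Result False)"
  \<comment> \<open>Phase 2: counterexample \<sigma>, core \<rho>, new clause; \<C> satisfiable by \<tau>' \<in> [A]: repeat\<close>
| refine:
  "\<lbrakk> \<not> cnf_sat \<alpha> (lift_cnf \<phi>); defs_sat \<alpha> ds; term_sat \<alpha> \<tau>;
     \<rho> \<subseteq> \<tau> \<union> {(Orig u, \<alpha> (Orig u)) | u. u \<in> set us};
     \<not> satisfiable (lift_cnf \<phi> \<union> \<phi>A \<union> units \<rho>);
     \<tau>' \<in> asg A;
     \<forall>\<mu>. term_sat \<mu> \<tau>' \<longrightarrow> cnf_sat \<mu> (insert (neg_trm (restr \<rho> A)) CC) \<rbrakk>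
   \<Longrightarrow> alg_step us es D \<phi> (Phase2 A \<phi>A ds CC \<tau>)
        (Phase2 A \<phi>A ds (insert (neg_trm (restr \<rho> A)) CC) \<tau>')"

end

theory Submission
  imports Defs
begin


lemma asg_mem: "T \<in> asg V \<longleftrightarrow> (\<exists>g. T = {(v, g v) | v. v \<in> V})"
  by (simp add: asg_def)

lemma asg_fst: "T \<in> asg V \<Longrightarrow> (x,b) \<in> T \<Longrightarrow> x \<in> V"
  by (auto simp: asg_def)

lemma asg_fun: "T \<in> asg V \<Longrightarrow> (x,b) \<in> T \<Longrightarrow> (x,c) \<in> T \<Longrightarrow> b = c"
  by (auto simp: asg_def)

lemma asg_tot: "T \<in> asg V \<Longrightarrow> x \<in> V \<Longrightarrow> \<exists>b. (x,b) \<in> T"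
  by (auto simp: asg_def)

lemma asg_graph: "{(v, g v) | v. v \<in> V} \<in> asg V"
  by (auto simp: asg_def)

lemma graph_mem: "(x,b) \<in> {(v, g v) | v. v \<in> V} \<longleftrightarrow> x \<in> V \<and> b = g x"
  by blast

lemma asg_self: "T \<in> asg V \<Longrightarrow> term_sat (\<lambda>x. (x,True)\<in>T) T"
  by (auto simp: asg_def term_sat_def lit_sat_def)

lemma term_sat_asg_eq: "T \<in> asg V \<Longrightarrow> term_sat \<alpha> T \<longleftrightarrow> T = {(v, \<alpha> v) | v. v \<in> V}"
  by (auto simp: asg_def term_sat_def lit_sat_def)

lemma asg_sub: "asg V \<subseteq> Pow (V \<times> UNIV)"
  by (auto simp: asg_def)

lemma finite_asg: "finite V \<Longrightarrow> finite (asg V)"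
  by (rule finite_subset[OF asg_sub]) auto

lemma finite_asg_mem: "finite V \<Longrightarrow> T \<in> asg V \<Longrightarrow> finite T"
proof -
  assume a: "finite V" "T \<in> asg V"
  have "T \<subseteq> V \<times> UNIV" using asg_sub[of V] a(2) by blast
  moreover have "finite (V \<times> (UNIV :: bool set))" using a(1) by simp
  ultimately show ?thesis by (rule finite_subset)
qed

lemma cnf_sat_Un[simp]: "cnf_sat \<alpha> (F \<union> G) = (cnf_sat \<alpha> F \<and> cnf_sat \<alpha> G)"
  by (auto simp: cnf_sat_def)

lemma cnf_sat_insert[simp]: "cnf_sat \<alpha> (insert C G) = (clause_sat \<alpha> C \<and> cnf_sat \<alpha> G)"
  by (auto simp: cnf_sat_def)

lemma cnf_sat_empty[simp]: "cnf_sat \<alpha> {}"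
  by (auto simp: cnf_sat_def)

lemma cnf_sat_units[simp]: "cnf_sat \<alpha> (units T) = term_sat \<alpha> T"
  by (auto simp: cnf_sat_def units_def term_sat_def clause_sat_def)

lemma clause_sat_empty[simp]: "\<not> clause_sat \<alpha> {}"
  by (auto simp: clause_sat_def)

lemma clause_sat_insert[simp]: "clause_sat \<alpha> (insert l C) = (lit_sat \<alpha> l \<or> clause_sat \<alpha> C)"
  by (auto simp: clause_sat_def)

lemma clause_sat_neg[simp]: "clause_sat \<alpha> (neg_trm T) = (\<not> term_sat \<alpha> T)"
proof -
  have e: "neg_trm T = (\<lambda>l. (fst l, \<not> snd l)) ` T" unfolding neg_trm_def by force
  show ?thesis unfolding e clause_sat_def term_sat_def lit_sat_def by auto
qed

lemma lift_clause: "clause_sat \<alpha> ((\<lambda>(x, b). (Orig x, b)) ` C) = clause_sat (\<lambda>x. \<alpha> (Orig x)) C"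
  unfolding clause_sat_def lit_sat_def by force

lemma lift_sat: "cnf_sat \<alpha> (lift_cnf F) = cnf_sat (\<lambda>x. \<alpha> (Orig x)) F"
  unfolding cnf_sat_def lift_cnf_def by (simp add: lift_clause)

lemma cnf_cong: "(\<And>C l. C \<in> F \<Longrightarrow> l \<in> C \<Longrightarrow> \<alpha> (fst l) = \<beta> (fst l)) \<Longrightarrow> cnf_sat \<alpha> F = cnf_sat \<beta> F"
  unfolding cnf_sat_def clause_sat_def lit_sat_def by (intro ball_cong bex_cong refl) auto

lemma feval_cong: "(\<And>x. x \<in> fvars \<psi> \<Longrightarrow> \<alpha> x = \<beta> x) \<Longrightarrow> feval \<alpha> \<psi> = feval \<beta> \<psi>"
  by (induction \<psi>) auto

lemma is_def_mono: "is_definition \<chi> X x \<psi> \<Longrightarrow> \<chi> \<subseteq> \<chi>' \<Longrightarrow> X \<subseteq> X' \<Longrightarrow> is_definition \<chi>' X' x \<psi>"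
  unfolding is_definition_def cnf_sat_def by blast

fun conj_lits :: "'a lit list \<Rightarrow> 'a form" where
  "conj_lits [] = FTrue"
| "conj_lits (l # ls) = FAnd (if snd l then FVar (fst l) else FNot (FVar (fst l))) (conj_lits ls)"

lemma feval_conj: "feval \<alpha> (conj_lits ls) = (\<forall>l\<in>set ls. lit_sat \<alpha> l)"
  by (induction ls) (auto simp: lit_sat_def)

lemma fvars_conj: "fvars (conj_lits ls) = fst ` set ls"
  by (induction ls) auto

fun disj_forms :: "'a form list \<Rightarrow> 'a form" where
  "disj_forms [] = FFalse"
| "disj_forms (f # fs) = FOr f (disj_forms fs)"

lemma feval_disj: "feval \<alpha> (disj_forms fs) = (\<exists>f\<in>set fs. feval \<alpha> f)"
  by (induction fs) auto

lemma fvars_disj: "fvars (disj_forms fs) = \<Union>(fvars ` set fs)"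
  by (induction fs) auto

lemma sat3: "cnf_sat \<alpha> (\<chi> \<union> units \<xi> \<union> {{l}}) = (cnf_sat \<alpha> \<chi> \<and> term_sat \<alpha> \<xi> \<and> lit_sat \<alpha> l)"
  by auto

lemma definable:
  assumes fX: "finite X"
    and H: "\<forall>\<xi>\<in>asg X. \<not> satisfiable (\<chi> \<union> units \<xi> \<union> {{(x,True)}}) \<or>
                       \<not> satisfiable (\<chi> \<union> units \<xi> \<union> {{(x,False)}})"
  shows "has_definition \<chi> X x"
proof -
  define S where "S = {\<xi>\<in>asg X. satisfiable (\<chi> \<union> units \<xi> \<union> {{(x,True)}})}"
  have fS: "finite S" using finite_asg[OF fX] S_def by auto
  obtain L where L: "set L = S" using finite_list[OF fS] by blast
  define lst where "lst \<xi> = (SOME ls. set ls = \<xi>)" for \<xi> :: "'a trm"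
  have lst: "set (lst \<xi>) = \<xi>" if "\<xi> \<in> asg X" for \<xi>
    unfolding lst_def by (rule someI_ex) (rule finite_list[OF finite_asg_mem[OF fX that]])
  define \<psi> where "\<psi> = disj_forms (map (\<lambda>\<xi>. conj_lits (lst \<xi>)) L)"
  have ev: "feval \<alpha> \<psi> = (\<exists>\<xi>\<in>S. term_sat \<alpha> \<xi>)" for \<alpha>
    unfolding \<psi>_def feval_disj term_sat_def using L lst S_def by (auto simp: feval_conj)
  have fv: "fvars \<psi> \<subseteq> X"
    unfolding \<psi>_def fvars_disj using L lst S_def by (auto simp: fvars_conj dest: asg_fst)
  have "\<alpha> x = feval \<alpha> \<psi>" if sat: "cnf_sat \<alpha> \<chi>" for \<alpha>
  proof -
    define \<xi> where "\<xi> = {(v, \<alpha> v) | v. v \<in> X}"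
    have xi: "\<xi> \<in> asg X" unfolding \<xi>_def by (rule asg_graph)
    have ts: "term_sat \<alpha> \<xi>" using term_sat_asg_eq[OF xi] \<xi>_def by simp
    have eq: "term_sat \<alpha> \<xi>' \<longleftrightarrow> \<xi>' = \<xi>" if "\<xi>' \<in> S" for \<xi>'
      using term_sat_asg_eq[of \<xi>' X \<alpha>] that \<xi>_def S_def by auto
    have "feval \<alpha> \<psi> = (\<xi> \<in> S)" unfolding ev
      using eq by auto
    also have "\<dots> = satisfiable (\<chi> \<union> units \<xi> \<union> {{(x,True)}})" using xi S_def by auto
    also have "\<dots> = \<alpha> x"
    proof
      assume s: "satisfiable (\<chi> \<union> units \<xi> \<union> {{(x,True)}})"
      show "\<alpha> x"
      proof (rule ccontr)
        assume "\<not> \<alpha> x"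
        then have "satisfiable (\<chi> \<union> units \<xi> \<union> {{(x,False)}})"
          unfolding satisfiable_def using sat ts by (auto simp: lit_sat_def)
        then show False using H xi s by blast
      qed
    next
      assume "\<alpha> x" then show "satisfiable (\<chi> \<union> units \<xi> \<union> {{(x,True)}})"
        unfolding satisfiable_def using sat ts by (auto simp: lit_sat_def)
    qed
    finally show ?thesis by simp
  qed
  then show ?thesis unfolding has_definition_def is_definition_def using fv by blast
qed



definition lift_trm :: "'v trm \<Rightarrow> 'v avar trm" where
  "lift_trm s = {(Orig v, b) | v b. (v,b) \<in> s}"

fun arbcls :: "'v avar \<Rightarrow> 'v avar cnf" where
  "arbcls (Orig x) = {}"
| "arbcls (Arb e s) =
     {insert (Arb e s, True) (insert (Orig e, False) (neg_trm (lift_trm s))),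
      insert (Arb e s, False) (insert (Orig e, True) (neg_trm (lift_trm s)))}"

definition arbval :: "('v \<Rightarrow> 'v trm \<Rightarrow> bool) \<Rightarrow> 'v avar \<Rightarrow> bool" where
  "arbval f v = (case v of Orig _ \<Rightarrow> False | Arb e s \<Rightarrow> f e s)"

locale dq =
  fixes us :: "'v list" and es :: "'v list" and D :: "'v \<Rightarrow> 'v set" and \<phi> :: "'v cnf"
  assumes wf: "dqbf_wf us es D \<phi>"
begin

lemma dist: "distinct (us @ es)" using wf by (simp add: dqbf_wf_def)
lemma Dsub: "e \<in> set es \<Longrightarrow> D e \<subseteq> set us" using wf by (simp add: dqbf_wf_def)
lemma phivars: "C \<in> \<phi> \<Longrightarrow> fst ` C \<subseteq> set us \<union> set es" using wf by (simp add: dqbf_wf_def)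
lemma es_not_us: "e \<in> set es \<Longrightarrow> e \<notin> set us" using dist by auto
lemma finD: "e \<in> set es \<Longrightarrow> finite (D e)" using Dsub finite_subset by blast

definition model :: "('v \<Rightarrow> 'v trm \<Rightarrow> bool) \<Rightarrow> bool" where
  "model f = (\<forall>\<sigma>\<in>asg (set us).
      cnf_sat (\<lambda>x. if x \<in> set us then (x,True)\<in>\<sigma> else f x (restr \<sigma> (D x))) \<phi>)"

lemma dqbf_true_model: "dqbf_true us es D \<phi> = (\<exists>f. model f)"
  by (simp add: dqbf_true_def model_def)

definition Univ :: "'v avar set" where
  "Univ = {Arb e s | e s. e \<in> set es \<and> s \<in> asg (D e)}"

lemma finite_Univ: "finite Univ"
proof -
  have "Univ = (\<Union>e\<in>set es. (\<lambda>s. Arb e s) ` asg (D e))" unfolding Univ_def by auto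
  then show ?thesis by (auto intro!: finite_imageI finite_asg finD)
qed

definition invA :: "'v avar set \<Rightarrow> 'v avar cnf \<Rightarrow> bool" where
  "invA A \<phi>A = (A \<subseteq> Univ \<and> \<phi>A = \<Union>(arbcls ` A))"

definition invD :: "'v avar set \<Rightarrow> 'v avar cnf \<Rightarrow> ('v \<times> 'v avar form) list \<Rightarrow> bool" where
  "invD A \<phi>A ds = (\<forall>(e,\<psi>)\<in>set ds. is_definition (lift_cnf \<phi> \<union> \<phi>A) (Orig ` D e \<union> A) (Orig e) \<psi>)"

fun invs :: "'v state \<Rightarrow> bool" where
  "invs (Phase1 i A \<phi>A ds) = (i \<le> length es \<and> invA A \<phi>A \<and> invD A \<phi>A ds \<and> map fst ds = take i es)"
| "invs (Phase2 A \<phi>A ds CC \<tau>) = (invA A \<phi>A \<and> invD A \<phi>A ds \<and> map fst ds = es \<and> \<tau> \<in> asg A \<and>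
     (\<forall>C\<in>CC. fst ` C \<subseteq> A) \<and> (\<forall>\<mu>. term_sat \<mu> \<tau> \<longrightarrow> cnf_sat \<mu> CC) \<and>
     (\<forall>f. model f \<longrightarrow> (\<forall>C\<in>CC. clause_sat (arbval f) C)))"
| "invs (Result b) = (b = dqbf_true us es D \<phi>)"

lemma invs_init: "invs init_state"
  by (simp add: init_state_def invA_def invD_def)

lemma finA: assumes "invA A \<phi>A" shows "finite A"
proof -
  have "A \<subseteq> Univ" using assms by (simp add: invA_def)
  then show ?thesis using finite_Univ by (rule finite_subset)
qed

lemma A_arb: assumes "invA A \<phi>A" "a \<in> A" shows "\<exists>e s. a = Arb e s \<and> e \<in> set es \<and> s \<in> asg (D e)"
proof -
  have "a \<in> Univ" using assms by (auto simp: invA_def)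
  then show ?thesis unfolding Univ_def by simp
qed

lemma A_no_orig: "invA A \<phi>A \<Longrightarrow> Orig x \<notin> A"
  using A_arb by fastforce

lemma restr_lift:
  assumes "\<sigma> = {(v, b). (Orig v, b) \<in> \<xi> \<and> v \<in> D e}"
  shows "restr \<xi> (Orig ` D e) = lift_trm \<sigma>"
  using assms unfolding restr_def lift_trm_def by force

lemma sigma_asg:
  assumes "\<xi> \<in> asg (Orig ` D e \<union> A)" "\<sigma> = {(v, b). (Orig v, b) \<in> \<xi> \<and> v \<in> D e}"
  shows "\<sigma> \<in> asg (D e)"
proof -
  obtain g where g: "\<xi> = {(v, g v) | v. v \<in> Orig ` D e \<union> A}" using asg_mem[THEN iffD1, OF assms(1)] by blast
  have "\<sigma> = {(v, g (Orig v)) | v. v \<in> D e}"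
  proof (rule set_eqI)
    fix p :: "'v \<times> bool"
    obtain v b where p: "p = (v,b)" by (cases p)
    show "p \<in> \<sigma> \<longleftrightarrow> p \<in> {(v, g (Orig v)) | v. v \<in> D e}"
      unfolding p assms(2) g graph_mem by auto
  qed
  then show ?thesis by (simp only: asg_graph)
qed

lemma arb_new:
  assumes inv: "invA A \<phi>A" and xi: "\<xi> \<in> asg (Orig ` D e \<union> A)"
    and s1: "satisfiable (lift_cnf \<phi> \<union> \<phi>A \<union> units \<xi> \<union> {{(Orig e, True)}})"
    and s2: "satisfiable (lift_cnf \<phi> \<union> \<phi>A \<union> units \<xi> \<union> {{(Orig e, False)}})"
    and sg: "\<sigma> = {(v, b). (Orig v, b) \<in> \<xi> \<and> v \<in> D e}"
  shows "Arb e \<sigma> \<notin> A"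
proof
  assume inA: "Arb e \<sigma> \<in> A"
  then have cls: "arbcls (Arb e \<sigma>) \<subseteq> \<phi>A" using inv unfolding invA_def by blast
  obtain b where b: "(Arb e \<sigma>, b) \<in> \<xi>" using asg_tot[OF xi] inA by blast
  have lx: "lift_trm \<sigma> \<subseteq> \<xi>" using restr_lift[OF sg] unfolding restr_def by blast
  have key: "\<alpha> (Arb e \<sigma>) = \<alpha> (Orig e) \<and> \<alpha> (Arb e \<sigma>) = b"
    if "cnf_sat \<alpha> \<phi>A" "term_sat \<alpha> \<xi>" for \<alpha>
  proof -
    have ts: "term_sat \<alpha> (lift_trm \<sigma>)" using that(2) lx unfolding term_sat_def by blast
    have "cnf_sat \<alpha> (arbcls (Arb e \<sigma>))" using that(1) cls unfolding cnf_sat_def by blast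
    then have "\<alpha> (Arb e \<sigma>) = \<alpha> (Orig e)" using ts by (auto simp: lit_sat_def)
    moreover have "\<alpha> (Arb e \<sigma>) = b" using that(2) b unfolding term_sat_def lit_sat_def by force
    ultimately show ?thesis by simp
  qed
  obtain \<alpha>1 where a1: "cnf_sat \<alpha>1 (lift_cnf \<phi> \<union> \<phi>A \<union> units \<xi> \<union> {{(Orig e, True)}})"
    using s1 satisfiable_def by blast
  obtain \<alpha>2 where a2: "cnf_sat \<alpha>2 (lift_cnf \<phi> \<union> \<phi>A \<union> units \<xi> \<union> {{(Orig e, False)}})"
    using s2 satisfiable_def by blast
  have "\<alpha>1 (Orig e)" using a1 by (simp add: lit_sat_def)
  moreover have "\<not> \<alpha>2 (Orig e)" using a2 by (simp add: lit_sat_def)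
  moreover have "\<alpha>1 (Arb e \<sigma>) = \<alpha>1 (Orig e) \<and> \<alpha>1 (Arb e \<sigma>) = b" using key a1 by simp
  moreover have "\<alpha>2 (Arb e \<sigma>) = \<alpha>2 (Orig e) \<and> \<alpha>2 (Arb e \<sigma>) = b" using key a2 by simp
  ultimately show False by (cases b) simp_all
qed

end


context dq begin

lemma key_clause:
  assumes iA: "invA A \<phi>A" and tau: "\<tau> \<in> asg A"
    and rho: "\<rho> \<subseteq> \<tau> \<union> {(Orig u, \<alpha> (Orig u)) | u. u \<in> set us}"
    and uns: "\<not> satisfiable (lift_cnf \<phi> \<union> \<phi>A \<union> units \<rho>)"
    and m: "model f"
  shows "clause_sat (arbval f) (neg_trm (restr \<rho> A))"
proof (rule ccontr)
  assume "\<not> clause_sat (arbval f) (neg_trm (restr \<rho> A))"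
  then have ts: "term_sat (arbval f) (restr \<rho> A)" by simp
  define \<sigma> where "\<sigma> = {(u, \<alpha> (Orig u)) | u. u \<in> set us}"
  have sig: "\<sigma> \<in> asg (set us)" unfolding \<sigma>_def by (rule asg_graph)
  define \<nu> where "\<nu> x = (if x \<in> set us then (x,True) \<in> \<sigma> else f x (restr \<sigma> (D x)))" for x
  have nu: "cnf_sat \<nu> \<phi>" unfolding \<nu>_def[abs_def] using bspec[OF m[unfolded model_def] sig] .
  have nu_us: "\<nu> u = \<alpha> (Orig u)" if uu: "u \<in> set us" for u
  proof -
    have "(u,True) \<in> \<sigma> \<longleftrightarrow> \<alpha> (Orig u)" unfolding \<sigma>_def using uu by blast
    then show ?thesis using uu unfolding \<nu>_def by simp
  qed
  define \<mu> where "\<mu> v = (case v of Orig x \<Rightarrow> \<nu> x | Arb e s \<Rightarrow> f e s)" for v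
  have m1: "cnf_sat \<mu> (lift_cnf \<phi>)" unfolding lift_sat using nu by (simp add: \<mu>_def)
  have m2: "cnf_sat \<mu> (arbcls a)" if aA: "a \<in> A" for a
  proof -
    obtain e s where a: "a = Arb e s" and e: "e \<in> set es" and s: "s \<in> asg (D e)"
      using A_arb[OF iA aA] by blast
    obtain g where g: "s = {(v, g v) | v. v \<in> D e}" using asg_mem[THEN iffD1, OF s] by blast
    show ?thesis
    proof (cases "term_sat \<mu> (lift_trm s)")
      case True
      have agree: "\<alpha> (Orig v) = g v" if "v \<in> D e" for v
      proof -
        have "(Orig v, g v) \<in> lift_trm s" using that g unfolding lift_trm_def by blast
        then have "\<mu> (Orig v) = g v" using True unfolding term_sat_def lit_sat_def by force
        then show ?thesis using nu_us Dsub[OF e] that by (auto simp: \<mu>_def)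
      qed
      have "restr \<sigma> (D e) = s" unfolding restr_def \<sigma>_def g using agree Dsub[OF e] by auto
      then have "\<mu> (Orig e) = \<mu> (Arb e s)" using es_not_us[OF e] by (simp add: \<mu>_def \<nu>_def)
      then show ?thesis unfolding a by (auto simp: lit_sat_def cnf_sat_def)
    next
      case False
      then show ?thesis unfolding a by (auto simp: cnf_sat_def)
    qed
  qed
  have m2': "cnf_sat \<mu> \<phi>A" using m2 iA unfolding invA_def cnf_sat_def by blast
  have m3: "term_sat \<mu> \<rho>"
    unfolding term_sat_def
  proof
    fix l assume l: "l \<in> \<rho>"
    show "lit_sat \<mu> l"
    proof (cases "l \<in> \<tau>")
      case True
      then have fA: "fst l \<in> A" using asg_fst[OF tau, of "fst l" "snd l"] by simp
      then have "l \<in> restr \<rho> A" using l unfolding restr_def by blast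
      then have "lit_sat (arbval f) l" using ts unfolding term_sat_def by blast
      moreover obtain e s where "fst l = Arb e s" using A_arb[OF iA fA] by blast
      ultimately show ?thesis by (simp add: lit_sat_def arbval_def \<mu>_def)
    next
      case False
      then obtain u where "u \<in> set us" "l = (Orig u, \<alpha> (Orig u))" using l rho by blast
      then show ?thesis using nu_us by (simp add: lit_sat_def \<mu>_def)
    qed
  qed
  have "satisfiable (lift_cnf \<phi> \<union> \<phi>A \<union> units \<rho>)"
    unfolding satisfiable_def using m1 m2' m3 by auto
  then show False using uns by blast
qed

lemma true_ok:
  assumes inv: "invs (Phase2 A \<phi>A ds CC \<tau>)"
    and H: "\<not> (\<exists>\<alpha>. \<not> cnf_sat \<alpha> (lift_cnf \<phi>) \<and> defs_sat \<alpha> ds \<and> term_sat \<alpha> \<tau>)"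
  shows "dqbf_true us es D \<phi>"
proof -
  have iA: "invA A \<phi>A" and iD: "invD A \<phi>A ds" and mf: "map fst ds = es" and tau: "\<tau> \<in> asg A"
    using inv by auto
  have dds: "distinct (map fst ds)" using mf dist by simp
  define ev where "ev s v = (case v of Orig u \<Rightarrow> (u,True) \<in> s | Arb _ _ \<Rightarrow> (v,True) \<in> \<tau>)" for s v
  define f where "f x s = (case map_of ds x of Some \<psi> \<Rightarrow> feval (ev s) \<psi> | None \<Rightarrow> False)" for x s
  have "model f" unfolding model_def
  proof
    fix \<sigma> assume sig: "\<sigma> \<in> asg (set us)"
    define \<nu> where "\<nu> x = (if x \<in> set us then (x,True)\<in>\<sigma> else f x (restr \<sigma> (D x)))" for x
    define \<alpha> where "\<alpha> v = (case v of Orig x \<Rightarrow> \<nu> x | Arb _ _ \<Rightarrow> (v,True) \<in> \<tau>)" for v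
    have ta: "term_sat \<alpha> \<tau>" unfolding term_sat_def
    proof
      fix l assume l: "l \<in> \<tau>"
      obtain a b where ab: "l = (a,b)" by (cases l)
      have "a \<in> A" using asg_fst[OF tau] l ab by blast
      then obtain e s where a: "a = Arb e s" using A_arb[OF iA] by blast
      have "((a,True) \<in> \<tau>) = b" using asg_fun[OF tau] l ab by (cases b) auto
      then show "lit_sat \<alpha> l" using ab a by (simp add: lit_sat_def \<alpha>_def)
    qed
    have ds: "defs_sat \<alpha> ds" unfolding defs_sat_def
    proof (intro ballI, clarify)
      fix e \<psi> assume in_ds: "(e, \<psi>) \<in> set ds"
      have e: "e \<in> set es" using in_ds mf by force
      have ms: "map_of ds e = Some \<psi>" using map_of_is_SomeI[OF dds in_ds] .
      have isd: "is_definition (lift_cnf \<phi> \<union> \<phi>A) (Orig ` D e \<union> A) (Orig e) \<psi>"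
        using iD in_ds unfolding invD_def by blast
      then have fv: "fvars \<psi> \<subseteq> Orig ` D e \<union> A" by (simp add: is_definition_def)
      have "\<alpha> (Orig e) = feval (ev (restr \<sigma> (D e))) \<psi>"
        using es_not_us[OF e] ms by (simp add: \<alpha>_def \<nu>_def f_def)
      also have "\<dots> = feval \<alpha> \<psi>"
      proof (rule feval_cong)
        fix x assume "x \<in> fvars \<psi>"
        then have "x \<in> Orig ` D e \<union> A" using fv by blast
        then show "ev (restr \<sigma> (D e)) x = \<alpha> x"
        proof
          assume "x \<in> Orig ` D e"
          then obtain u where u: "x = Orig u" "u \<in> D e" by blast
          then have "u \<in> set us" using Dsub[OF e] by blast
          then show ?thesis using u by (simp add: ev_def \<alpha>_def \<nu>_def restr_def)
        next
          assume "x \<in> A"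
          then obtain e' s where "x = Arb e' s" using A_arb[OF iA] by blast
          then show ?thesis by (simp add: ev_def \<alpha>_def)
        qed
      qed
      finally show "\<alpha> (Orig e) = feval \<alpha> \<psi>" .
    qed
    have "cnf_sat \<alpha> (lift_cnf \<phi>)" using H ta ds by blast
    then have "cnf_sat \<nu> \<phi>" unfolding lift_sat by (simp add: \<alpha>_def)
    then show "cnf_sat (\<lambda>x. if x \<in> set us then (x, True) \<in> \<sigma> else f x (restr \<sigma> (D x))) \<phi>"
      unfolding \<nu>_def[abs_def] .
  qed
  then show ?thesis using dqbf_true_model by blast
qed

end


context dq begin

lemma step_invs:
  assumes "alg_step us es D \<phi> s t" and "invs s"
  shows "invs t"
  using assms
proof (induction rule: alg_step.induct)
  case (add_arbiter i e \<phi>A A \<xi> \<sigma> \<sigma>' ds)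
  have iA: "invA A \<phi>A" and iD: "invD A \<phi>A ds" using add_arbiter.prems by auto
  have e: "e \<in> set es" using add_arbiter.hyps(1,2) by simp
  have sa: "\<sigma> \<in> asg (D e)" using sigma_asg[OF add_arbiter.hyps(4,7)] .
  have rl: "\<sigma>' = lift_trm \<sigma>" using restr_lift[OF add_arbiter.hyps(7)] add_arbiter.hyps(8) by simp
  have "Arb e \<sigma> \<in> Univ" using e sa unfolding Univ_def by blast
  then have iA': "invA (insert (Arb e \<sigma>) A)
     (\<phi>A \<union> {insert (Arb e \<sigma>, True) (insert (Orig e, False) (neg_trm \<sigma>')),
            insert (Arb e \<sigma>, False) (insert (Orig e, True) (neg_trm \<sigma>'))})"
    using iA rl unfolding invA_def by auto
  have iD': "invD (insert (Arb e \<sigma>) A)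
     (\<phi>A \<union> {insert (Arb e \<sigma>, True) (insert (Orig e, False) (neg_trm \<sigma>')),
            insert (Arb e \<sigma>, False) (insert (Orig e, True) (neg_trm \<sigma>'))}) ds"
    unfolding invD_def
  proof (intro ballI, clarify)
    fix e' \<psi> assume "(e', \<psi>) \<in> set ds"
    then have "is_definition (lift_cnf \<phi> \<union> \<phi>A) (Orig ` D e' \<union> A) (Orig e') \<psi>"
      using iD unfolding invD_def by blast
    then show "is_definition (lift_cnf \<phi> \<union> (\<phi>A \<union> {insert (Arb e \<sigma>, True) (insert (Orig e, False) (neg_trm \<sigma>')),
            insert (Arb e \<sigma>, False) (insert (Orig e, True) (neg_trm \<sigma>'))}))
          (Orig ` D e' \<union> insert (Arb e \<sigma>) A) (Orig e') \<psi>"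
      by (rule is_def_mono) auto
  qed
  show ?case using add_arbiter.prems iA' iD' by simp
next
  case (choose_def i e \<phi>A A \<psi> ds)
  have "map fst (ds @ [(e, \<psi>)]) = take (Suc i) es"
    using choose_def by (simp add: take_Suc_conv_app_nth)
  moreover have "invD A \<phi>A (ds @ [(e, \<psi>)])"
    using choose_def by (auto simp: invD_def)
  ultimately show ?case using choose_def by simp
next
  case (start_phase2 i A \<phi>A ds)
  have "{(a, True) | a. a \<in> A} \<in> asg A" using asg_graph[of "\<lambda>_. True" A] by simp
  then show ?case using start_phase2 by simp
next
  case (ret_true ds \<tau> A \<phi>A CC)
  then show ?case using true_ok by simp
next
  case (ret_false \<alpha> ds \<tau> \<rho> \<phi>A A CC)
  have "\<not> model f" for f
  proof
    assume m: "model f"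
    have iA: "invA A \<phi>A" and tau: "\<tau> \<in> asg A" using ret_false.prems by auto
    have "clause_sat (arbval f) (neg_trm (restr \<rho> A))"
      using key_clause[OF iA tau ret_false.hyps(4,5) m] .
    moreover have "\<forall>C\<in>CC. clause_sat (arbval f) C" using ret_false.prems m by simp
    ultimately have "satisfiable (insert (neg_trm (restr \<rho> A)) CC)"
      unfolding satisfiable_def cnf_sat_def by auto
    then show False using ret_false.hyps(6) by blast
  qed
  then show ?case using dqbf_true_model by simp
next
  case (refine \<alpha> ds \<tau> \<rho> \<phi>A \<tau>' A CC)
  have iA: "invA A \<phi>A" and tau: "\<tau> \<in> asg A" using refine.prems by auto
  have fC: "fst ` neg_trm (restr \<rho> A) \<subseteq> A"
    unfolding neg_trm_def restr_def by force
  have "\<forall>f. model f \<longrightarrow> clause_sat (arbval f) (neg_trm (restr \<rho> A))"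
    using key_clause[OF iA tau refine.hyps(4,5)] by blast
  then show ?case using refine fC by auto
qed

lemma progress:
  assumes "invs s"
  shows "(\<exists>b. s = Result b) \<or> (\<exists>t. alg_step us es D \<phi> s t)"
proof (cases s)
  case (Phase1 i A \<phi>A ds)
  have inv: "i \<le> length es" "invA A \<phi>A" using assms Phase1 by auto
  show ?thesis
  proof (cases "i = length es")
    case True
    then show ?thesis using Phase1 alg_step.start_phase2 by blast
  next
    case False
    then have il: "i < length es" using inv by simp
    define e where "e = es ! i"
    have e: "e \<in> set es" using il e_def by simp
    show ?thesis
    proof (cases "has_definition (lift_cnf \<phi> \<union> \<phi>A) (Orig ` D e \<union> A) (Orig e)")
      case True
      then obtain \<psi> where "is_definition (lift_cnf \<phi> \<union> \<phi>A) (Orig ` D e \<union> A) (Orig e) \<psi>"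
        unfolding has_definition_def by blast
      then show ?thesis using Phase1 alg_step.choose_def[OF il e_def] by blast
    next
      case False
      have fX: "finite (Orig ` D e \<union> A)" using finD[OF e] finA[OF inv(2)] by simp
      obtain \<xi> where xi: "\<xi> \<in> asg (Orig ` D e \<union> A)"
        and s1: "satisfiable (lift_cnf \<phi> \<union> \<phi>A \<union> units \<xi> \<union> {{(Orig e, True)}})"
        and s2: "satisfiable (lift_cnf \<phi> \<union> \<phi>A \<union> units \<xi> \<union> {{(Orig e, False)}})"
        using definable[OF fX] False by blast
      define \<sigma> where "\<sigma> = {(v, b). (Orig v, b) \<in> \<xi> \<and> v \<in> D e}"
      define \<sigma>' where "\<sigma>' = restr \<xi> (Orig ` D e)"
      show ?thesis
        using alg_step.add_arbiter[where us=us and es=es and D=D and \<phi>=\<phi> and i=i and e=e and A=A and \<phi>A=\<phi>A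
          and \<xi>=\<xi> and \<sigma>=\<sigma> and \<sigma>'=\<sigma>' and ds=ds, OF il e_def False xi s1 s2 \<sigma>_def \<sigma>'_def] Phase1 by blast
    qed
  qed
next
  case (Phase2 A \<phi>A ds CC \<tau>)
  have iA: "invA A \<phi>A" and iD: "invD A \<phi>A ds" and mf: "map fst ds = es" and tau: "\<tau> \<in> asg A"
    and CCv: "\<forall>C\<in>CC. fst ` C \<subseteq> A"
    using assms Phase2 by auto
  show ?thesis
  proof (cases "\<exists>\<alpha>. \<not> cnf_sat \<alpha> (lift_cnf \<phi>) \<and> defs_sat \<alpha> ds \<and> term_sat \<alpha> \<tau>")
    case False
    then show ?thesis using Phase2 alg_step.ret_true by blast
  next
    case True
    then obtain \<alpha> where a1: "\<not> cnf_sat \<alpha> (lift_cnf \<phi>)" and a2: "defs_sat \<alpha> ds"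
      and a3: "term_sat \<alpha> \<tau>" by blast
    define \<rho> where "\<rho> = \<tau> \<union> {(Orig u, \<alpha> (Orig u)) | u. u \<in> set us}"
    have rho: "\<rho> \<subseteq> \<tau> \<union> {(Orig u, \<alpha> (Orig u)) | u. u \<in> set us}" unfolding \<rho>_def by simp
    have uns: "\<not> satisfiable (lift_cnf \<phi> \<union> \<phi>A \<union> units \<rho>)"
    proof
      assume "satisfiable (lift_cnf \<phi> \<union> \<phi>A \<union> units \<rho>)"
      then obtain \<mu> where m1: "cnf_sat \<mu> (lift_cnf \<phi> \<union> \<phi>A)" and m2: "term_sat \<mu> \<rho>"
        unfolding satisfiable_def by auto
      have agU: "\<mu> (Orig u) = \<alpha> (Orig u)" if "u \<in> set us" for u
      proof -
        have "(Orig u, \<alpha> (Orig u)) \<in> \<rho>" unfolding \<rho>_def using that by blast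
        then show ?thesis using m2 unfolding term_sat_def lit_sat_def by force
      qed
      have agA: "\<mu> a = \<alpha> a" if aA: "a \<in> A" for a
      proof -
        obtain b where b: "(a,b) \<in> \<tau>" using asg_tot[OF tau aA] by blast
        have "\<mu> a = b" using m2 b unfolding \<rho>_def term_sat_def lit_sat_def by force
        moreover have "\<alpha> a = b" using a3 b unfolding term_sat_def lit_sat_def by force
        ultimately show ?thesis by simp
      qed
      have agE: "\<mu> (Orig e) = \<alpha> (Orig e)" if e: "e \<in> set es" for e
      proof -
        obtain \<psi> where in_ds: "(e, \<psi>) \<in> set ds" using e mf by force
        have isd: "is_definition (lift_cnf \<phi> \<union> \<phi>A) (Orig ` D e \<union> A) (Orig e) \<psi>"
          using iD in_ds unfolding invD_def by blast
        have "\<mu> (Orig e) = feval \<mu> \<psi>" using isd m1 unfolding is_definition_def by blast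
        also have "\<dots> = feval \<alpha> \<psi>"
        proof (rule feval_cong)
          fix x assume "x \<in> fvars \<psi>"
          then have "x \<in> Orig ` D e \<union> A" using isd unfolding is_definition_def by blast
          then show "\<mu> x = \<alpha> x" using agU agA Dsub[OF e] by blast
        qed
        also have "\<dots> = \<alpha> (Orig e)" using a2 in_ds unfolding defs_sat_def by fastforce
        finally show ?thesis .
      qed
      have "cnf_sat (\<lambda>x. \<mu> (Orig x)) \<phi> = cnf_sat (\<lambda>x. \<alpha> (Orig x)) \<phi>"
      proof (rule cnf_cong)
        fix C l assume "C \<in> \<phi>" "l \<in> C"
        then have "fst l \<in> set us \<union> set es" using phivars by blast
        then show "\<mu> (Orig (fst l)) = \<alpha> (Orig (fst l))" using agU agE by blast
      qed
      moreover have "cnf_sat (\<lambda>x. \<mu> (Orig x)) \<phi>" using m1 lift_sat by auto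
      ultimately show False using a1 lift_sat by auto
    qed
    show ?thesis
    proof (cases "satisfiable (insert (neg_trm (restr \<rho> A)) CC)")
      case False
      then show ?thesis using Phase2 alg_step.ret_false[OF a1 a2 a3 rho uns False] by blast
    next
      case True
      then obtain \<beta> where \<beta>: "cnf_sat \<beta> (insert (neg_trm (restr \<rho> A)) CC)"
        unfolding satisfiable_def by blast
      define \<tau>' where "\<tau>' = {(a, \<beta> a) | a. a \<in> A}"
      have t': "\<tau>' \<in> asg A" unfolding \<tau>'_def by (rule asg_graph)
      have fC: "fst ` neg_trm (restr \<rho> A) \<subseteq> A"
        unfolding neg_trm_def restr_def by force
      have sat': "cnf_sat \<mu> (insert (neg_trm (restr \<rho> A)) CC)" if "term_sat \<mu> \<tau>'" for \<mu>
      proof -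
        have ag: "\<mu> a = \<beta> a" if "a \<in> A" for a
          using \<open>term_sat \<mu> \<tau>'\<close> that unfolding \<tau>'_def term_sat_def lit_sat_def by force
        have "cnf_sat \<mu> (insert (neg_trm (restr \<rho> A)) CC) = cnf_sat \<beta> (insert (neg_trm (restr \<rho> A)) CC)"
        proof (rule cnf_cong)
          fix C l assume "C \<in> insert (neg_trm (restr \<rho> A)) CC" "l \<in> C"
          then have "fst l \<in> A" using fC CCv by blast
          then show "\<mu> (fst l) = \<beta> (fst l)" using ag by blast
        qed
        then show ?thesis using \<beta> by simp
      qed
      show ?thesis using Phase2 alg_step.refine[OF a1 a2 a3 rho uns t'] sat' by blast
    qed
  qed
next
  case (Result b)
  then show ?thesis by blast
qed

end


context dq begin

fun mph :: "'v state \<Rightarrow> nat" where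
  "mph (Phase1 _ _ _ _) = 2" | "mph (Phase2 _ _ _ _ _) = 1" | "mph (Result _) = 0"

fun mlen :: "'v state \<Rightarrow> nat" where
  "mlen (Phase1 i _ _ _) = length es - i"
| "mlen (Phase2 A _ _ CC _) = card (Pow (A \<times> (UNIV :: bool set)) - CC)"
| "mlen (Result _) = 0"

fun marb :: "'v state \<Rightarrow> nat" where
  "marb (Phase1 _ A _ _) = card (Univ - A)"
| "marb _ = 0"

lemma step_dec:
  assumes "alg_step us es D \<phi> s t" and "invs s"
  shows "(t, s) \<in> measures [mph, mlen, marb]"
  using assms
proof (induction rule: alg_step.induct)
  case (add_arbiter i e \<phi>A A \<xi> \<sigma> \<sigma>' ds)
  have iA: "invA A \<phi>A" using add_arbiter.prems by auto
  have e: "e \<in> set es" using add_arbiter.hyps(1,2) by simp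
  have sa: "\<sigma> \<in> asg (D e)" using sigma_asg[OF add_arbiter.hyps(4,7)] .
  have inU: "Arb e \<sigma> \<in> Univ" using e sa unfolding Univ_def by blast
  have nA: "Arb e \<sigma> \<notin> A" using arb_new[OF iA add_arbiter.hyps(4,5,6,7)] .
  have "Univ - insert (Arb e \<sigma>) A \<subset> Univ - A" using inU nA by blast
  then have "card (Univ - insert (Arb e \<sigma>) A) < card (Univ - A)"
    by (rule psubset_card_mono[rotated]) (simp add: finite_Univ)
  then show ?case by simp
next
  case (choose_def i e \<phi>A A \<psi> ds)
  then show ?case by simp
next
  case (start_phase2 i A \<phi>A ds)
  then show ?case by simp
next
  case (ret_true ds \<tau> A \<phi>A CC)
  then show ?case by simp
next
  case (ret_false \<alpha> ds \<tau> \<rho> \<phi>A A CC)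
  then show ?case by simp
next
  case (refine \<alpha> ds \<tau> \<rho> \<phi>A \<tau>' A CC)
  have iA: "invA A \<phi>A" and tau: "\<tau> \<in> asg A" and satCC: "\<forall>\<mu>. term_sat \<mu> \<tau> \<longrightarrow> cnf_sat \<mu> CC"
    using refine.prems by auto
  define C where "C = neg_trm (restr \<rho> A)"
  define \<mu>0 where "\<mu>0 x = ((x, True) \<in> \<tau>)" for x
  have t0: "term_sat \<mu>0 \<tau>" unfolding \<mu>0_def[abs_def] using asg_self[OF tau] .
  have sub: "restr \<rho> A \<subseteq> \<tau>"
  proof
    fix l assume l: "l \<in> restr \<rho> A"
    then have "l \<in> \<rho>" "fst l \<in> A" unfolding restr_def by auto
    then show "l \<in> \<tau>" using refine.hyps(4) A_no_orig[OF iA] by auto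
  qed
  have "\<not> clause_sat \<mu>0 C" unfolding C_def using t0 sub by (auto simp: term_sat_def)
  then have nC: "C \<notin> CC" using satCC t0 unfolding cnf_sat_def by blast
  have CP: "C \<in> Pow (A \<times> (UNIV :: bool set))" unfolding C_def neg_trm_def restr_def by force
  have fin: "finite (Pow (A \<times> (UNIV :: bool set)) - CC)" using finA[OF iA] by simp
  have "Pow (A \<times> (UNIV :: bool set)) - insert C CC \<subset> Pow (A \<times> (UNIV :: bool set)) - CC"
    using nC CP by blast
  then have "card (Pow (A \<times> (UNIV :: bool set)) - insert C CC) < card (Pow (A \<times> (UNIV :: bool set)) - CC)"
    using fin by (rule psubset_card_mono[rotated])
  then show ?case unfolding C_def by simp
qed

end

theorem corollary1:
  fixes us es :: "'v list" and D :: "'v \<Rightarrow> 'v set" and \<phi> :: "'v cnf"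
  assumes "dqbf_wf us es D \<phi>"
  shows "\<not> (\<exists>f. f 0 = init_state \<and> (\<forall>n. alg_step us es D \<phi> (f n) (f (Suc n)))) \<and>
         (\<forall>s. (alg_step us es D \<phi>)\<^sup>*\<^sup>* init_state s \<longrightarrow>
             (\<exists>b. s = Result b) \<or> (\<exists>t. alg_step us es D \<phi> s t)) \<and>
         (\<forall>b. (alg_step us es D \<phi>)\<^sup>*\<^sup>* init_state (Result b) \<longrightarrow>
             b = dqbf_true us es D \<phi>)"
proof -
  interpret dq us es D \<phi> by (rule dq.intro) (rule assms)
  have R: "dq.invs us es D \<phi> s" if "(alg_step us es D \<phi>)\<^sup>*\<^sup>* init_state s" for s
    using that
  proof (induction rule: rtranclp_induct)
    case base
    then show ?case by (rule invs_init)
  next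
    case (step y z)
    then show ?case using step_invs by blast
  qed
  have T: "\<not> (\<exists>f. f 0 = init_state \<and> (\<forall>n. alg_step us es D \<phi> (f n) (f (Suc n))))"
  proof
    assume "\<exists>f. f 0 = init_state \<and> (\<forall>n. alg_step us es D \<phi> (f n) (f (Suc n)))"
    then obtain f where f0: "f 0 = init_state" and fs: "\<And>n. alg_step us es D \<phi> (f n) (f (Suc n))"
      by blast
    have I: "invs (f n)" for n
    proof (induction n)
      case 0
      then show ?case using f0 invs_init by simp
    next
      case (Suc n)
      then show ?case using step_invs fs by blast
    qed
    have "\<forall>n. (f (Suc n), f n) \<in> measures [mph, mlen, marb]" using step_dec fs I by blast
    moreover have "wf (measures [mph, mlen, marb])" by (rule wf_measures)
    ultimately show False unfolding wf_iff_no_infinite_down_chain by blast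
  qed
  have P: "\<forall>s. (alg_step us es D \<phi>)\<^sup>*\<^sup>* init_state s \<longrightarrow>
             (\<exists>b. s = Result b) \<or> (\<exists>t. alg_step us es D \<phi> s t)"
    using R progress by blast
  have C: "\<forall>b. (alg_step us es D \<phi>)\<^sup>*\<^sup>* init_state (Result b) \<longrightarrow> b = dqbf_true us es D \<phi>"
    using R by fastforce
  show ?thesis using T P C by blast
qed


end
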